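(* Let $M=(V,\delta)$ be an $n$-point metric and let $r':V\to\mathbb{R}^+$ be a bounding function such that $SDG(M,r')$ is connected. Then $OPT(M)\le OPT(M,r') = O(\log n)\cdot OPT(M)$. More precisely, letting $T$ be the minimum spanning tree of $SDG(M,r')$ and defining $r(v)$ as the weight of the heaviest edge of $T$ incident to $v$, the assignment $r$ is feasible for the bounded problem and $COST(r)\le 2w(T) = O(\log n)\cdot w(MST(M)) = O(\log n)\cdot OPT(M)$.
   Context: For a metric $M=(V,\delta)$ and $r:V\to\mathbb{R}^+$, $SDG(M,r)$ is the graph on $V$ containing edge $(u,v)$ of weight $\delta(u,v)$ iff $r(u)\ge\delta(u,v)$ and $r(v)\ge\delta(u,v)$. The cost of a range assignment $r$ is $COST(r)=\sum_{v\in V} r(v)$. Given a bounding function $r'$, the bounded range assignment problem asks for $r$ with $r(v)\le r'(v)$ for all $v$, $SDG(M,r)$ connected, and minimum $COST(r)$; its optimal cost is $OPT(M,r')$. The unbounded problem is the case $r'(v)=diam(M)$ (the largest pairwise distance) for all $v$; its optimal cost is $OPT(M)$. $MST(M)$ is the minimum spanning tree of the complete weighted graph on $V$ with weights $\delta$. *)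

theory Defs
  imports Complex_Main
begin

definition metric_on :: "'a set \<Rightarrow> ('a \<Rightarrow> 'a \<Rightarrow> real) \<Rightarrow> bool" where
  "metric_on V \<delta> \<longleftrightarrow> finite V \<and>
     (\<forall>u\<in>V. \<forall>v\<in>V. \<delta> u v = 0 \<longleftrightarrow> u = v) \<and>
     (\<forall>u\<in>V. \<forall>v\<in>V. 0 \<le> \<delta> u v) \<and>
     (\<forall>u\<in>V. \<forall>v\<in>V. \<delta> u v = \<delta> v u) \<and>
     (\<forall>u\<in>V. \<forall>v\<in>V. \<forall>w\<in>V. \<delta> u w \<le> \<delta> u v + \<delta> v w)"

definition diam :: "'a set \<Rightarrow> ('a \<Rightarrow> 'a \<Rightarrow> real) \<Rightarrow> real" where
  "diam V \<delta> = Max {\<delta> u v | u v. u \<in> V \<and> v \<in> V}"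

text \<open>Undirected edges are 2-element sets; the weight of edge {u,v} is delta u v.\<close>
definition edge_weight :: "('a \<Rightarrow> 'a \<Rightarrow> real) \<Rightarrow> 'a set \<Rightarrow> real" where
  "edge_weight \<delta> e = (SOME d. \<exists>u v. e = {u, v} \<and> d = \<delta> u v)"

definition weight :: "('a \<Rightarrow> 'a \<Rightarrow> real) \<Rightarrow> 'a set set \<Rightarrow> real" where
  "weight \<delta> F = (\<Sum>e\<in>F. edge_weight \<delta> e)"

definition sdg_edges :: "'a set \<Rightarrow> ('a \<Rightarrow> 'a \<Rightarrow> real) \<Rightarrow> ('a \<Rightarrow> real) \<Rightarrow> 'a set set" where
  "sdg_edges V \<delta> r = {{u, v} | u v. u \<in> V \<and> v \<in> V \<and> u \<noteq> v \<and> r u \<ge> \<delta> u v \<and> r v \<ge> \<delta> u v}"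

definition complete_edges :: "'a set \<Rightarrow> 'a set set" where
  "complete_edges V = {{u, v} | u v. u \<in> V \<and> v \<in> V \<and> u \<noteq> v}"

definition graph_connected :: "'a set \<Rightarrow> 'a set set \<Rightarrow> bool" where
  "graph_connected V E \<longleftrightarrow>
     (\<forall>u\<in>V. \<forall>v\<in>V. (u, v) \<in> ({(x, y). {x, y} \<in> E \<and> x \<noteq> y})\<^sup>*)"

definition spanning_tree :: "'a set \<Rightarrow> 'a set set \<Rightarrow> 'a set set \<Rightarrow> bool" where
  "spanning_tree V E T \<longleftrightarrow> T \<subseteq> E \<and> graph_connected V T \<and> card T = card V - 1"

definition is_mst :: "'a set \<Rightarrow> ('a \<Rightarrow> 'a \<Rightarrow> real) \<Rightarrow> 'a set set \<Rightarrow> 'a set set \<Rightarrow> bool" where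
  "is_mst V \<delta> E T \<longleftrightarrow> spanning_tree V E T \<and>
     (\<forall>T'. spanning_tree V E T' \<longrightarrow> weight \<delta> T \<le> weight \<delta> T')"

definition COST :: "'a set \<Rightarrow> ('a \<Rightarrow> real) \<Rightarrow> real" where
  "COST V r = (\<Sum>v\<in>V. r v)"

definition feasible :: "'a set \<Rightarrow> ('a \<Rightarrow> 'a \<Rightarrow> real) \<Rightarrow> ('a \<Rightarrow> real) \<Rightarrow> ('a \<Rightarrow> real) \<Rightarrow> bool" where
  "feasible V \<delta> r' r \<longleftrightarrow> (\<forall>v\<in>V. 0 \<le> r v \<and> r v \<le> r' v) \<and> graph_connected V (sdg_edges V \<delta> r)"

definition OPT_bounded :: "'a set \<Rightarrow> ('a \<Rightarrow> 'a \<Rightarrow> real) \<Rightarrow> ('a \<Rightarrow> real) \<Rightarrow> real" where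
  "OPT_bounded V \<delta> r' = Inf {COST V r | r. feasible V \<delta> r' r}"

definition OPT :: "'a set \<Rightarrow> ('a \<Rightarrow> 'a \<Rightarrow> real) \<Rightarrow> real" where
  "OPT V \<delta> = OPT_bounded V \<delta> (\<lambda>_. diam V \<delta>)"

definition tree_range :: "('a \<Rightarrow> 'a \<Rightarrow> real) \<Rightarrow> 'a set set \<Rightarrow> 'a \<Rightarrow> real" where
  "tree_range \<delta> T v = Max {edge_weight \<delta> e | e. e \<in> T \<and> v \<in> e}"

end

theory Submission
  imports Defs "HOL-Library.Transitive_Closure_Table"
begin

definition Rel :: "'a set set \<Rightarrow> ('a \<times> 'a) set" where
  "Rel E = {(x,y). {x,y} \<in> E \<and> x \<noteq> y}"

lemma gc_Rel: "graph_connected V E \<longleftrightarrow> (\<forall>u\<in>V. \<forall>v\<in>V. (u,v) \<in> (Rel E)\<^sup>*)"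
  unfolding graph_connected_def Rel_def by simp

lemma ew_pair:
  assumes "\<And>u v. u \<in> {a,b} \<Longrightarrow> v \<in> {a,b} \<Longrightarrow> d u v = d v u"
  shows "edge_weight d {a,b} = d a b"
proof -
  have ex: "\<exists>u v. {a,b} = {u,v} \<and> d a b = d u v" by blast
  have "\<forall>x. (\<exists>u v. {a,b} = {u, v} \<and> x = d u v) \<longrightarrow> x = d a b"
  proof (intro allI impI)
    fix x assume "\<exists>u v. {a,b} = {u, v} \<and> x = d u v"
    then obtain u v where h: "{a,b} = {u,v}" "x = d u v" by blast
    then have "(u = a \<and> v = b) \<or> (u = b \<and> v = a)" by (metis doubleton_eq_iff)
    then show "x = d a b" using h assms by auto
  qed
  moreover have "\<exists>x. \<exists>u v. {a,b} = {u, v} \<and> x = d u v" by blast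
  then have "\<exists>u v. {a,b} = {u, v} \<and> (SOME x. \<exists>u v. {a,b} = {u, v} \<and> x = d u v) = d u v"
    by (rule someI_ex)
  ultimately show ?thesis unfolding edge_weight_def by blast
qed

lemma sym_Rel: "sym (Rel E)"
  unfolding Rel_def sym_def by (auto simp: insert_commute)

lemma Rel_rt_sym: "(x,y) \<in> (Rel E)\<^sup>* \<Longrightarrow> (y,x) \<in> (Rel E)\<^sup>*"
  using sym_Rel[of E] sym_rtrancl[of "Rel E"] unfolding sym_def by blast

lemma Rel_mono: "E \<subseteq> F \<Longrightarrow> (x,y) \<in> (Rel E)\<^sup>* \<Longrightarrow> (x,y) \<in> (Rel F)\<^sup>*"
proof -
  assume "E \<subseteq> F" "(x,y) \<in> (Rel E)\<^sup>*"
  have "Rel E \<subseteq> Rel F" using \<open>E \<subseteq> F\<close> unfolding Rel_def by auto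
  then have "(Rel E)\<^sup>* \<subseteq> (Rel F)\<^sup>*" by (rule rtrancl_mono)
  then show ?thesis using \<open>(x,y) \<in> (Rel E)\<^sup>*\<close> by (rule subsetD)
qed

lemma gc_mono: "graph_connected V E \<Longrightarrow> E \<subseteq> F \<Longrightarrow> graph_connected V F"
  unfolding gc_Rel by (metis Rel_mono)

fun pe :: "'a \<Rightarrow> 'a list \<Rightarrow> 'a set set" where
  "pe x [] = {}" | "pe x (z#zs) = insert {x,z} (pe z zs)"

lemma pe_sub: "e \<in> pe x xs \<Longrightarrow> e \<subseteq> set (x#xs)"
  by (induction x xs rule: pe.induct) auto

lemma pe_finite: "finite (pe x xs)"
  by (induction x xs rule: pe.induct) auto

abbreviation osc :: "('a \<Rightarrow> real) \<Rightarrow> 'a set \<Rightarrow> real" where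
  "osc f e \<equiv> edge_weight (\<lambda>a b. \<bar>f a - f b\<bar>) e"

lemma osc_pair: "osc f {a,b} = \<bar>f a - f b\<bar>"
  by (rule ew_pair) auto

lemma osc_nonneg: "e = {a,b} \<Longrightarrow> osc f e \<ge> 0"
  by (metis osc_pair abs_ge_zero)

lemma path_aux:
  assumes "rtrancl_path (\<lambda>a b. (a,b) \<in> Rel E) x xs y" "distinct (x#xs)"
  shows "\<bar>f x - f y\<bar> \<le> (\<Sum>e\<in>pe x xs. osc f e) \<and> pe x xs \<subseteq> E"
  using assms
proof (induction rule: rtrancl_path.induct)
  case (base x) then show ?case by simp
next
  case (step x z zs y)
  have nin: "{x,z} \<notin> pe z zs" using step.prems pe_sub[of "{x,z}" z zs] by auto
  have "\<bar>f x - f y\<bar> \<le> \<bar>f x - f z\<bar> + \<bar>f z - f y\<bar>" by linarith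
  also have "\<dots> \<le> osc f {x,z} + (\<Sum>e\<in>pe z zs. osc f e)"
    using step by (simp add: osc_pair)
  also have "\<dots> = (\<Sum>e\<in>pe x (z#zs). osc f e)"
    using sum.insert[OF pe_finite nin, of "osc f"] by simp
  finally show ?case using step(1) step.IH step.prems unfolding Rel_def by auto
qed

lemma rt_path: "(x,y) \<in> r\<^sup>* \<Longrightarrow> \<exists>xs. rtrancl_path (\<lambda>a b. (a,b) \<in> r) x xs y"
proof (induction rule: converse_rtrancl_induct)
  case base then show ?case using rtrancl_path.base by fast
next
  case (step y z) then show ?case using rtrancl_path.step by fast
qed

lemma path_osc:
  assumes "finite E" "\<forall>e\<in>E. \<exists>a b. e = {a,b}" "(x,y) \<in> (Rel E)\<^sup>*"
  shows "\<bar>f x - f y\<bar> \<le> (\<Sum>e\<in>E. osc f e)"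
proof -
  obtain xs where "rtrancl_path (\<lambda>a b. (a,b) \<in> Rel E) x xs y"
    using rt_path[OF assms(3)] by blast
  then obtain xs' where p: "rtrancl_path (\<lambda>a b. (a,b) \<in> Rel E) x xs' y" "distinct (x#xs')"
    by (rule rtrancl_path_distinct)
  from path_aux[OF p, of f] have h: "\<bar>f x - f y\<bar> \<le> (\<Sum>e\<in>pe x xs'. osc f e)" "pe x xs' \<subseteq> E"
    by auto
  have "(\<Sum>e\<in>pe x xs'. osc f e) \<le> (\<Sum>e\<in>E. osc f e)"
    apply (rule sum_mono2[OF assms(1) h(2)])
  proof -
    fix e assume "e \<in> E - pe x xs'"
    then obtain a b where "e = {a,b}" using assms(2) by blast
    then show "0 \<le> osc f e" by (rule osc_nonneg)
  qed
  with h show ?thesis by linarith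
qed


lemma ce_mem: "{a,b} \<in> complete_edges V \<Longrightarrow> a \<in> V \<and> b \<in> V \<and> a \<noteq> b"
proof -
  assume "{a,b} \<in> complete_edges V"
  then obtain u v where h: "{a,b} = {u,v}" "u \<in> V" "v \<in> V" "u \<noteq> v"
    unfolding complete_edges_def by blast
  then have "(u = a \<and> v = b) \<or> (u = b \<and> v = a)" by (metis doubleton_eq_iff)
  then show ?thesis using h by auto
qed

lemma ce_elem: "e \<in> complete_edges V \<Longrightarrow> \<exists>a b. e = {a,b} \<and> a \<in> V \<and> b \<in> V \<and> a \<noteq> b"
  unfolding complete_edges_def by blast

lemma ce_finite: "finite V \<Longrightarrow> finite (complete_edges V)"
proof -
  assume "finite V"
  have "complete_edges V \<subseteq> Pow V" unfolding complete_edges_def by blast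
  then show ?thesis using \<open>finite V\<close> by (meson finite_Pow_iff finite_subset)
qed

lemma bfs:
  assumes "graph_connected V E" "\<rho> \<in> V" "E \<subseteq> complete_edges V"
  shows "\<exists>p (dep::'a\<Rightarrow>nat). \<forall>v\<in>V-{\<rho>}. p v \<in> V \<and> {v, p v} \<in> E \<and> p v \<noteq> v \<and> dep (p v) < dep v"
proof -
  define R where "R = Rel E"
  define dep where "dep v = (LEAST k. (\<rho>,v) \<in> R ^^ k)" for v
  have key: "\<exists>w. {v,w} \<in> E \<and> w \<noteq> v \<and> dep w < dep v" if v: "v \<in> V - {\<rho>}" for v
  proof -
    have "(\<rho>,v) \<in> R\<^sup>*" using assms(1,2) v unfolding gc_Rel R_def by blast
    then obtain k where "(\<rho>,v) \<in> R ^^ k" using rtrancl_power by blast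
    then have dv: "(\<rho>,v) \<in> R ^^ dep v" unfolding dep_def by (rule LeastI)
    have "dep v \<noteq> 0"
    proof
      assume "dep v = 0" then have "(\<rho>,v) \<in> R ^^ 0" using dv by simp
      then show False using v by simp
    qed
    then obtain j where j: "dep v = Suc j" using not0_implies_Suc by blast
    then have "(\<rho>,v) \<in> R ^^ j O R" using dv by simp
    then obtain w where w: "(\<rho>,w) \<in> R ^^ j" "(w,v) \<in> R" by blast
    have "dep w \<le> j" unfolding dep_def using w(1) by (rule Least_le)
    moreover have "{v,w} \<in> E" "w \<noteq> v" using w(2) unfolding R_def Rel_def by (auto simp: insert_commute)
    ultimately show ?thesis using j by (intro exI[of _ w]) auto
  qed
  define p where "p v = (SOME w. {v,w} \<in> E \<and> w \<noteq> v \<and> dep w < dep v)" for v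
  have "\<forall>v\<in>V-{\<rho>}. p v \<in> V \<and> {v, p v} \<in> E \<and> p v \<noteq> v \<and> dep (p v) < dep v"
  proof
    fix v assume v: "v \<in> V - {\<rho>}"
    have h: "{v,p v} \<in> E \<and> p v \<noteq> v \<and> dep (p v) < dep v"
      unfolding p_def using key[OF v] by (rule someI_ex)
    then have "{v,p v} \<in> complete_edges V" using assms(3) by blast
    then have "p v \<in> V" using ce_mem[of v "p v" V] by simp
    with h show "p v \<in> V \<and> {v, p v} \<in> E \<and> p v \<noteq> v \<and> dep (p v) < dep v" by blast
  qed
  then show ?thesis by blast
qed

definition PS :: "'a set \<Rightarrow> 'a \<Rightarrow> ('a \<Rightarrow> 'a) \<Rightarrow> ('a \<Rightarrow> nat) \<Rightarrow> bool" where
  "PS V \<rho> p dep \<longleftrightarrow> \<rho> \<in> V \<and> (\<forall>v\<in>V-{\<rho>}. p v \<in> V \<and> p v \<noteq> v \<and> dep (p v) < dep v)"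

definition tree_of :: "'a set \<Rightarrow> 'a \<Rightarrow> ('a \<Rightarrow> 'a) \<Rightarrow> 'a set set" where
  "tree_of V \<rho> p = (\<lambda>v. {v, p v}) ` (V - {\<rho>})"

definition anc :: "'a set \<Rightarrow> 'a \<Rightarrow> ('a \<Rightarrow> 'a) \<Rightarrow> ('a \<times> 'a) set" where
  "anc V \<rho> p = {(u, p u) | u. u \<in> V - {\<rho>}}"

definition sub :: "'a set \<Rightarrow> 'a \<Rightarrow> ('a \<Rightarrow> 'a) \<Rightarrow> 'a \<Rightarrow> 'a set" where
  "sub V \<rho> p v = {u \<in> V. (u, v) \<in> (anc V \<rho> p)\<^sup>*}"

lemma PS_inj:
  assumes "PS V \<rho> p dep"
  shows "inj_on (\<lambda>v. {v, p v}) (V - {\<rho>})"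
proof
  fix u v assume u: "u \<in> V - {\<rho>}" and v: "v \<in> V - {\<rho>}" and eq: "{u, p u} = {v, p v}"
  show "u = v"
  proof (rule ccontr)
    assume "u \<noteq> v"
    then have e: "u = p v \<and> v = p u" using eq by (metis doubleton_eq_iff)
    have d1: "dep (p u) < dep u" and d2: "dep (p v) < dep v" using assms u v unfolding PS_def by auto
    have "dep u < dep v" using d2 e by metis
    moreover have "dep v < dep u" using d1 e by metis
    ultimately show False by linarith
  qed
qed

lemma PS_card:
  assumes "PS V \<rho> p dep" "finite V"
  shows "card (tree_of V \<rho> p) = card V - 1"
proof -
  have "card (tree_of V \<rho> p) = card (V - {\<rho>})"
    unfolding tree_of_def using PS_inj[OF assms(1)] by (rule card_image)
  also have "\<dots> = card V - 1" using assms unfolding PS_def by simp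
  finally show ?thesis .
qed

lemma PS_root:
  assumes "PS V \<rho> p dep" "u \<in> V"
  shows "(u, \<rho>) \<in> (anc V \<rho> p)\<^sup>*"
  using assms(2)
proof (induction "dep u" arbitrary: u rule: less_induct)
  case less
  show ?case
  proof (cases "u = \<rho>")
    case True then show ?thesis by simp
  next
    case False
    then have h: "p u \<in> V" "dep (p u) < dep u" using assms(1) less.prems unfolding PS_def by auto
    have "(u, p u) \<in> anc V \<rho> p" unfolding anc_def using False less.prems by blast
    moreover have "(p u, \<rho>) \<in> (anc V \<rho> p)\<^sup>*" using less.hyps[OF h(2) h(1)] .
    ultimately show ?thesis by (rule converse_rtrancl_into_rtrancl)
  qed
qed

lemma anc_Rel: "anc V \<rho> p \<subseteq> Rel (tree_of V \<rho> p)" if "PS V \<rho> p dep"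
proof
  fix x assume "x \<in> anc V \<rho> p"
  then obtain u where u: "x = (u, p u)" "u \<in> V - {\<rho>}" unfolding anc_def by blast
  then have "p u \<noteq> u" using that unfolding PS_def by blast
  moreover have "{u, p u} \<in> tree_of V \<rho> p" unfolding tree_of_def using u(2) by blast
  ultimately show "x \<in> Rel (tree_of V \<rho> p)" unfolding Rel_def u(1) by auto
qed

lemma anc_Rel_rt: "PS V \<rho> p dep \<Longrightarrow> (u,v) \<in> (anc V \<rho> p)\<^sup>* \<Longrightarrow> (u,v) \<in> (Rel (tree_of V \<rho> p))\<^sup>*"
proof -
  assume a: "PS V \<rho> p dep" "(u,v) \<in> (anc V \<rho> p)\<^sup>*"
  have "(anc V \<rho> p)\<^sup>* \<subseteq> (Rel (tree_of V \<rho> p))\<^sup>*" using anc_Rel[OF a(1)] by (rule rtrancl_mono)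
  then show ?thesis using a(2) by (rule subsetD)
qed

lemma PS_conn:
  assumes "PS V \<rho> p dep"
  shows "graph_connected V (tree_of V \<rho> p)"
  unfolding gc_Rel
proof (intro ballI)
  fix u v assume "u \<in> V" "v \<in> V"
  have "(u,\<rho>) \<in> (Rel (tree_of V \<rho> p))\<^sup>*" using anc_Rel_rt[OF assms PS_root[OF assms \<open>u\<in>V\<close>]] .
  moreover have "(v,\<rho>) \<in> (Rel (tree_of V \<rho> p))\<^sup>*" using anc_Rel_rt[OF assms PS_root[OF assms \<open>v\<in>V\<close>]] .
  then have "(\<rho>,v) \<in> (Rel (tree_of V \<rho> p))\<^sup>*" by (rule Rel_rt_sym)
  ultimately show "(u,v) \<in> (Rel (tree_of V \<rho> p))\<^sup>*" by (rule rtrancl_trans)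
qed

lemma anc_trancl_dep:
  assumes "PS V \<rho> p dep" "(u,v) \<in> (anc V \<rho> p)\<^sup>+"
  shows "dep v < dep u"
  using assms(2)
proof (induction rule: trancl_induct)
  case (base y) then show ?case using assms(1) unfolding anc_def PS_def by auto
next
  case (step y z)
  then obtain w where "y = w" "z = p w" "w \<in> V - {\<rho>}" unfolding anc_def by blast
  then have "dep z < dep y" using assms(1) unfolding PS_def by blast
  then show ?case using step.IH by linarith
qed

lemma anc_antisym:
  assumes "PS V \<rho> p dep" "(u,v) \<in> (anc V \<rho> p)\<^sup>*" "(v,u) \<in> (anc V \<rho> p)\<^sup>*"
  shows "u = v"
proof (rule ccontr)
  assume "u \<noteq> v"
  then have "(u,v) \<in> (anc V \<rho> p)\<^sup>+" "(v,u) \<in> (anc V \<rho> p)\<^sup>+"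
    using assms(2,3) by (auto simp: rtrancl_eq_or_trancl)
  then have "dep v < dep u" "dep u < dep v" using anc_trancl_dep[OF assms(1)] by auto
  then show False by linarith
qed

lemma spanning_PS:
  assumes "spanning_tree V E T" "E \<subseteq> complete_edges V" "finite V" "\<rho> \<in> V"
  shows "\<exists>p dep. PS V \<rho> p dep \<and> T = tree_of V \<rho> p"
proof -
  have TE: "T \<subseteq> complete_edges V" using assms(1,2) unfolding spanning_tree_def by blast
  have gc: "graph_connected V T" using assms(1) unfolding spanning_tree_def by blast
  obtain p and dep :: "'a \<Rightarrow> nat" where
    h: "\<forall>v\<in>V-{\<rho>}. p v \<in> V \<and> {v, p v} \<in> T \<and> p v \<noteq> v \<and> dep (p v) < dep v"
    using bfs[OF gc assms(4) TE] by blast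
  have ps: "PS V \<rho> p dep" unfolding PS_def using h assms(4) by blast
  have sub: "tree_of V \<rho> p \<subseteq> T" unfolding tree_of_def using h by blast
  have fin: "finite T" using TE ce_finite[OF assms(3)] finite_subset by blast
  have "card (tree_of V \<rho> p) = card T"
    using PS_card[OF ps assms(3)] assms(1) unfolding spanning_tree_def by simp
  then have "tree_of V \<rho> p = T" using card_subset_eq[OF fin sub] by simp
  with ps show ?thesis by blast
qed


lemma met_sym: "metric_on V \<delta> \<Longrightarrow> u \<in> V \<Longrightarrow> v \<in> V \<Longrightarrow> \<delta> u v = \<delta> v u"
  unfolding metric_on_def by blast

lemma met_nonneg: "metric_on V \<delta> \<Longrightarrow> u \<in> V \<Longrightarrow> v \<in> V \<Longrightarrow> 0 \<le> \<delta> u v"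
  unfolding metric_on_def by blast

lemma met_tri: "metric_on V \<delta> \<Longrightarrow> u \<in> V \<Longrightarrow> v \<in> V \<Longrightarrow> w \<in> V \<Longrightarrow> \<delta> u w \<le> \<delta> u v + \<delta> v w"
  unfolding metric_on_def by blast

lemma met_ew: "metric_on V \<delta> \<Longrightarrow> a \<in> V \<Longrightarrow> b \<in> V \<Longrightarrow> edge_weight \<delta> {a,b} = \<delta> a b"
  by (rule ew_pair) (auto dest: met_sym)

lemma sdg_sub: "sdg_edges V \<delta> r \<subseteq> complete_edges V"
  unfolding sdg_edges_def complete_edges_def by blast

lemma sdg_mem:
  assumes "metric_on V \<delta>" "{a,b} \<in> sdg_edges V \<delta> r"
  shows "a \<in> V \<and> b \<in> V \<and> a \<noteq> b \<and> \<delta> a b \<le> r a \<and> \<delta> a b \<le> r b"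
proof -
  obtain u v where h: "{a,b} = {u,v}" "u \<in> V" "v \<in> V" "u \<noteq> v" "\<delta> u v \<le> r u" "\<delta> u v \<le> r v"
    using assms(2) unfolding sdg_edges_def by blast
  then have "(u = a \<and> v = b) \<or> (u = b \<and> v = a)" by (metis doubleton_eq_iff)
  then show ?thesis
  proof
    assume "u = a \<and> v = b" then show ?thesis using h by auto
  next
    assume "u = b \<and> v = a"
    then have "\<delta> a b = \<delta> u v" "a \<in> V" "b \<in> V" "a \<noteq> b" using h met_sym[OF assms(1)] by auto
    then show ?thesis using h \<open>u = b \<and> v = a\<close> by auto
  qed
qed

lemma sdg_intro:
  assumes "a \<in> V" "b \<in> V" "a \<noteq> b" "\<delta> a b \<le> r a" "\<delta> a b \<le> r b"
  shows "{a,b} \<in> sdg_edges V \<delta> r"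
  using assms unfolding sdg_edges_def by blast

lemma weight_tree:
  assumes "metric_on V \<delta>" "PS V \<rho> p dep"
  shows "weight \<delta> (tree_of V \<rho> p) = (\<Sum>v\<in>V-{\<rho>}. \<delta> v (p v))"
proof -
  have "weight \<delta> (tree_of V \<rho> p) = (\<Sum>v\<in>V-{\<rho>}. edge_weight \<delta> {v, p v})"
    unfolding weight_def tree_of_def
    using sum.reindex[OF PS_inj[OF assms(2)], of "edge_weight \<delta>"] by (simp add: comp_def)
  also have "\<dots> = (\<Sum>v\<in>V-{\<rho>}. \<delta> v (p v))"
  proof (rule sum.cong)
    fix v assume "v \<in> V - {\<rho>}"
    then have "v \<in> V" "p v \<in> V" using assms(2) unfolding PS_def by auto
    then show "edge_weight \<delta> {v, p v} = \<delta> v (p v)" by (rule met_ew[OF assms(1)])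
  qed simp
  finally show ?thesis .
qed

lemma anc_step:
  assumes "(x,v) \<in> (anc V \<rho> p)\<^sup>*" "x \<noteq> v"
  shows "x \<in> V - {\<rho>} \<and> (p x, v) \<in> (anc V \<rho> p)\<^sup>*"
  using assms
proof (cases rule: converse_rtranclE)
  case (step z)
  then show ?thesis unfolding anc_def by blast
qed simp

lemma anc_V: "PS V \<rho> p dep \<Longrightarrow> (x,y) \<in> anc V \<rho> p \<Longrightarrow> y \<in> V"
  unfolding anc_def PS_def by blast

lemma cut:
  assumes met: "metric_on V \<delta>" and fin: "finite V" and ps: "PS V \<rho> p dep"
    and TT: "T = tree_of V \<rho> p" and mst: "is_mst V \<delta> G T" and GC: "G \<subseteq> complete_edges V"
    and v: "v \<in> V - {\<rho>}" and x: "x \<in> sub V \<rho> p v" and y: "y \<in> V" "y \<notin> sub V \<rho> p v"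
    and xyG: "{x,y} \<in> G"
  shows "\<delta> v (p v) \<le> \<delta> x y"
proof (rule ccontr)
  assume less: "\<not> \<delta> v (p v) \<le> \<delta> x y"
  let ?A = "anc V \<rho> p"
  define ev where "ev = {v, p v}"
  define F where "F = T - {ev}"
  define T' where "T' = insert {x,y} F"
  have xV: "x \<in> V" and xv: "(x,v) \<in> ?A\<^sup>*" using x unfolding sub_def by auto
  have vV: "v \<in> V" "p v \<in> V" using v ps unfolding PS_def by auto
  have vsub: "v \<in> sub V \<rho> p v" unfolding sub_def using vV by simp
  have xy: "x \<noteq> y" using x y by auto
  have evT: "ev \<in> T" unfolding ev_def TT tree_of_def using v by blast
  have Tfin: "finite T" unfolding TT tree_of_def using fin by simp
  have TG: "T \<subseteq> G" using mst unfolding is_mst_def spanning_tree_def by blast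
  have nev: "{x,y} \<noteq> ev"
  proof
    assume "{x,y} = ev"
    then have "(x = v \<and> y = p v) \<or> (x = p v \<and> y = v)" unfolding ev_def by (metis doubleton_eq_iff)
    then have "\<delta> x y = \<delta> v (p v)" using met_sym[OF met] vV by auto
    then show False using less by simp
  qed
  have notT: "{x,y} \<notin> T"
  proof
    assume "{x,y} \<in> T"
    then obtain u where u: "u \<in> V - {\<rho>}" "{x,y} = {u, p u}" unfolding TT tree_of_def by blast
    then have "(x = u \<and> y = p u) \<or> (x = p u \<and> y = u)" by (metis doubleton_eq_iff)
    then show False
    proof
      assume a: "x = u \<and> y = p u"
      show False
      proof (cases "x = v")
        case True then show False using nev a unfolding ev_def by simp
      next
        case False
        then have "(p x, v) \<in> ?A\<^sup>*" using anc_step[OF xv] by blast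
        then have "y \<in> sub V \<rho> p v" using a y(1) unfolding sub_def by simp
        then show False using y by simp
      qed
    next
      assume a: "x = p u \<and> y = u"
      then have "(y, x) \<in> ?A" using u unfolding anc_def by blast
      then have "(y, v) \<in> ?A\<^sup>*" using xv by (rule converse_rtrancl_into_rtrancl)
      then show False using y unfolding sub_def by simp
    qed
  qed
  have FT': "F \<subseteq> T'" unfolding T'_def by blast
  have outside: "(u, \<rho>) \<in> (Rel F)\<^sup>*" if "u \<in> V" "u \<notin> sub V \<rho> p v" for u
    using that
  proof (induction "dep u" arbitrary: u rule: less_induct)
    case less
    show ?case
    proof (cases "u = \<rho>")
      case True then show ?thesis by simp
    next
      case False
      then have u: "u \<in> V - {\<rho>}" using less.prems by simp
      then have h: "p u \<in> V" "dep (p u) < dep u" "p u \<noteq> u" using ps unfolding PS_def by auto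
      have ua: "(u, p u) \<in> ?A" unfolding anc_def using u by blast
      have pu: "p u \<notin> sub V \<rho> p v"
      proof
        assume "p u \<in> sub V \<rho> p v"
        then have "(p u, v) \<in> ?A\<^sup>*" unfolding sub_def by simp
        then have "(u, v) \<in> ?A\<^sup>*" by (rule converse_rtrancl_into_rtrancl[OF ua])
        then show False using less.prems unfolding sub_def by simp
      qed
      have uv: "u \<noteq> v" using less.prems vsub by blast
      have "{u, p u} \<noteq> ev"
      proof
        assume "{u, p u} = ev"
        then have "u = v" using inj_onD[OF PS_inj[OF ps] _ u v] unfolding ev_def by simp
        then show False using uv by simp
      qed
      moreover have "{u, p u} \<in> T" unfolding TT tree_of_def using u by blast
      ultimately have "(u, p u) \<in> Rel F" unfolding F_def Rel_def using h(3) by auto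
      moreover have "(p u, \<rho>) \<in> (Rel F)\<^sup>*" using less.hyps[OF h(2) h(1) pu] .
      ultimately show ?thesis by (rule converse_rtrancl_into_rtrancl)
    qed
  qed
  have inside: "(u, v) \<in> (Rel F)\<^sup>*" if "u \<in> sub V \<rho> p v" for u
    using that
  proof (induction "dep u" arbitrary: u rule: less_induct)
    case less
    show ?case
    proof (cases "u = v")
      case True then show ?thesis by simp
    next
      case False
      have uA: "(u,v) \<in> ?A\<^sup>*" using less.prems unfolding sub_def by simp
      have u: "u \<in> V - {\<rho>}" and puv: "(p u, v) \<in> ?A\<^sup>*" using anc_step[OF uA False] by auto
      then have h: "p u \<in> V" "dep (p u) < dep u" "p u \<noteq> u" using ps unfolding PS_def by auto
      have pus: "p u \<in> sub V \<rho> p v" unfolding sub_def using h(1) puv by simp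
      have "{u, p u} \<noteq> ev"
      proof
        assume "{u, p u} = ev"
        then have "u = v" using inj_onD[OF PS_inj[OF ps] _ u v] unfolding ev_def by simp
        then show False using False by simp
      qed
      moreover have "{u, p u} \<in> T" unfolding TT tree_of_def using u by blast
      ultimately have "(u, p u) \<in> Rel F" unfolding F_def Rel_def using h(3) by auto
      moreover have "(p u, v) \<in> (Rel F)\<^sup>*" using less.hyps[OF h(2) pus] .
      ultimately show ?thesis by (rule converse_rtrancl_into_rtrancl)
    qed
  qed
  have toroot: "(u, \<rho>) \<in> (Rel T')\<^sup>*" if "u \<in> V" for u
  proof (cases "u \<in> sub V \<rho> p v")
    case False
    then show ?thesis using Rel_mono[OF FT' outside[OF that False]] by simp
  next
    case True
    have "(u, v) \<in> (Rel T')\<^sup>*" using Rel_mono[OF FT' inside[OF True]] .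
    moreover have "(v, x) \<in> (Rel T')\<^sup>*" using Rel_mono[OF FT' Rel_rt_sym[OF inside[OF x]]] .
    moreover have "(x, y) \<in> (Rel T')\<^sup>*" unfolding T'_def Rel_def using xy by auto
    moreover have "(y, \<rho>) \<in> (Rel T')\<^sup>*" using Rel_mono[OF FT' outside[OF y]] .
    ultimately show ?thesis by (meson rtrancl_trans)
  qed
  have gcT': "graph_connected V T'"
    unfolding gc_Rel
  proof (intro ballI)
    fix a b assume "a \<in> V" "b \<in> V"
    show "(a, b) \<in> (Rel T')\<^sup>*" using toroot[OF \<open>a\<in>V\<close>] Rel_rt_sym[OF toroot[OF \<open>b\<in>V\<close>]]
      by (rule rtrancl_trans)
  qed
  have Ffin: "finite F" unfolding F_def using Tfin by simp
  have xyF: "{x,y} \<notin> F" unfolding F_def using notT by simp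
  have cardT': "card T' = card T"
  proof -
    have "card T' = Suc (card F)" unfolding T'_def using Ffin xyF by simp
    also have "card F = card T - 1" unfolding F_def using evT Tfin by simp
    also have "Suc (card T - 1) = card T" using evT Tfin card_gt_0_iff by (metis Suc_diff_1 empty_iff)
    finally show ?thesis .
  qed
  have T'G: "T' \<subseteq> G" unfolding T'_def F_def using TG xyG by blast
  have stT': "spanning_tree V G T'"
    using mst cardT' T'G gcT' unfolding is_mst_def spanning_tree_def by simp
  then have le: "weight \<delta> T \<le> weight \<delta> T'" using mst unfolding is_mst_def by blast
  have "weight \<delta> T' = edge_weight \<delta> {x,y} + weight \<delta> F"
    unfolding T'_def weight_def using Ffin xyF by simp
  moreover have "weight \<delta> T = edge_weight \<delta> ev + weight \<delta> F"
    unfolding F_def weight_def using sum.remove[OF Tfin evT] by simp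
  moreover have "edge_weight \<delta> {x,y} = \<delta> x y" using met_ew[OF met xV y(1)] .
  moreover have "edge_weight \<delta> ev = \<delta> v (p v)" unfolding ev_def using met_ew[OF met vV] .
  ultimately show False using le less by linarith
qed


lemma st_props:
  assumes "spanning_tree V (complete_edges V) Tm" "finite V"
  shows "finite Tm" "\<forall>e\<in>Tm. \<exists>a b. e = {a,b} \<and> a \<in> V \<and> b \<in> V \<and> a \<noteq> b"
    "graph_connected V Tm"
proof -
  have TC: "Tm \<subseteq> complete_edges V" using assms(1) unfolding spanning_tree_def by blast
  then show "finite Tm" using ce_finite[OF assms(2)] finite_subset by blast
  show "\<forall>e\<in>Tm. \<exists>a b. e = {a,b} \<and> a \<in> V \<and> b \<in> V \<and> a \<noteq> b"
    using TC ce_elem by blast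
  show "graph_connected V Tm" using assms(1) unfolding spanning_tree_def by blast
qed

lemma weight_nonneg:
  assumes met: "metric_on V \<delta>" and "finite T" "\<forall>e\<in>T. \<exists>a b. e = {a,b} \<and> a \<in> V \<and> b \<in> V"
  shows "0 \<le> weight \<delta> T"
  unfolding weight_def
proof (rule sum_nonneg)
  fix e assume "e \<in> T"
  then obtain a b where "e = {a,b}" "a \<in> V" "b \<in> V" using assms(3) by blast
  then show "0 \<le> edge_weight \<delta> e" using met_ew[OF met] met_nonneg[OF met] by simp
qed

lemma lip_path:
  assumes met: "metric_on V \<delta>" and fin: "finite V" and st: "spanning_tree V (complete_edges V) Tm"
    and x: "x \<in> V" and y: "y \<in> V" and lip: "\<forall>a\<in>V. \<forall>b\<in>V. \<bar>f a - f b\<bar> \<le> \<delta> a b"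
  shows "\<bar>f x - f y\<bar> \<le> weight \<delta> Tm"
proof -
  note P = st_props[OF st fin]
  have "(x,y) \<in> (Rel Tm)\<^sup>*" using P(3) x y unfolding gc_Rel by blast
  moreover have P2: "\<forall>e\<in>Tm. \<exists>a b. e = {a,b}" using P(2) by blast
  ultimately have "\<bar>f x - f y\<bar> \<le> (\<Sum>e\<in>Tm. osc f e)" using path_osc[OF P(1) P2] by blast
  also have "\<dots> \<le> weight \<delta> Tm" unfolding weight_def
  proof (rule sum_mono)
    fix e assume "e \<in> Tm"
    then obtain a b where ab: "e = {a,b}" "a \<in> V" "b \<in> V" using P(2) by blast
    have "osc f e = \<bar>f a - f b\<bar>" unfolding ab(1) by (rule osc_pair)
    also have "\<dots> \<le> \<delta> a b" using lip ab by blast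
    also have "\<dots> = edge_weight \<delta> e" unfolding ab(1) using met_ew[OF met ab(2,3)] by simp
    finally show "osc f e \<le> edge_weight \<delta> e" .
  qed
  finally show ?thesis .
qed

lemma min_lip: "\<bar>min s c - min t c\<bar> \<le> \<bar>s - t\<bar>" for s t c :: real
  by (simp add: min_def abs_if)

lemma packing:
  assumes met: "metric_on V \<delta>" and fin: "finite V" and st: "spanning_tree V (complete_edges V) Tm"
    and BV: "B \<subseteq> V" and B2: "card B \<ge> 2" and m: "m > 0"
    and sep: "\<forall>i\<in>B. \<forall>j\<in>B. i \<noteq> j \<longrightarrow> m \<le> \<delta> i j"
  shows "real (card B) * m \<le> 4 * weight \<delta> Tm"
proof -
  note P = st_props[OF st fin]
  have Bfin: "finite B" using BV fin finite_subset by blast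
  define f where "f i x = min (\<delta> i x) (m/2)" for i x
  have low: "m/2 \<le> (\<Sum>e\<in>Tm. osc (f i) e)" if i: "i \<in> B" for i
  proof -
    have "\<exists>j\<in>B. j \<noteq> i"
    proof (rule ccontr)
      assume "\<not> (\<exists>j\<in>B. j \<noteq> i)"
      then have "B \<subseteq> {i}" by blast
      then have "card B \<le> card {i}" by (rule card_mono[rotated]) simp
      then have "card B \<le> 1" by simp
      then show False using B2 by simp
    qed
    then obtain j where j: "j \<in> B" "j \<noteq> i" by blast
    have iV: "i \<in> V" and jV: "j \<in> V" using i j BV by auto
    have "(i,j) \<in> (Rel Tm)\<^sup>*" using P(3) iV jV unfolding gc_Rel by blast
    moreover have P2: "\<forall>e\<in>Tm. \<exists>a b. e = {a,b}" using P(2) by blast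
    ultimately have "\<bar>f i i - f i j\<bar> \<le> (\<Sum>e\<in>Tm. osc (f i) e)" using path_osc[OF P(1) P2] by blast
    moreover have "\<delta> i i = 0" using met iV unfolding metric_on_def by blast
    then have "f i i = 0" unfolding f_def using m by simp
    moreover have "m \<le> \<delta> i j" using sep i j by auto
    then have "f i j = m/2" unfolding f_def using m by simp
    ultimately show ?thesis using m by simp
  qed
  have edge: "(\<Sum>i\<in>B. osc (f i) e) \<le> 2 * edge_weight \<delta> e" if e: "e \<in> Tm" for e
  proof -
    obtain a b where ab: "e = {a,b}" "a \<in> V" "b \<in> V" using P(2) e by blast
    define Na where "Na = {i\<in>B. \<delta> i a < m/2}"
    define Nb where "Nb = {i\<in>B. \<delta> i b < m/2}"
    have c1: "card Na \<le> 1" if "c \<in> V" "Na = {i\<in>B. \<delta> i c < m/2}" for Na c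
    proof -
      have "finite Na" using Bfin that(2) by simp
      moreover have "\<forall>a1\<in>Na. \<forall>a2\<in>Na. a1 = a2"
      proof (intro ballI, rule ccontr)
        fix a1 a2 assume h: "a1 \<in> Na" "a2 \<in> Na" "a1 \<noteq> a2"
        then have "a1 \<in> B" "a2 \<in> B" "\<delta> a1 c < m/2" "\<delta> a2 c < m/2" using that(2) by auto
        moreover have "\<delta> a1 a2 \<le> \<delta> a1 c + \<delta> c a2" using met_tri[OF met] BV that(1) calculation by blast
        moreover have "\<delta> c a2 = \<delta> a2 c" using met_sym[OF met] BV that(1) calculation by blast
        ultimately have "\<delta> a1 a2 < m" by linarith
        then show False using sep h \<open>a1 \<in> B\<close> \<open>a2 \<in> B\<close> by force
      qed
      ultimately show ?thesis using card_le_Suc0_iff_eq by (metis One_nat_def)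
    qed
    have cN: "card (Na \<union> Nb) \<le> 2"
      using c1[OF ab(2) Na_def] c1[OF ab(3) Nb_def] card_Un_le[of Na Nb] by linarith
    have "(\<Sum>i\<in>B. osc (f i) e) = (\<Sum>i\<in>Na \<union> Nb. osc (f i) e)"
    proof (rule sum.mono_neutral_right[OF Bfin])
      show "Na \<union> Nb \<subseteq> B" unfolding Na_def Nb_def by blast
      show "\<forall>i\<in>B - (Na \<union> Nb). osc (f i) e = 0"
      proof
        fix i assume "i \<in> B - (Na \<union> Nb)"
        then have "f i a = m/2" "f i b = m/2" unfolding Na_def Nb_def f_def by auto
        then show "osc (f i) e = 0" unfolding ab(1) osc_pair by simp
      qed
    qed
    also have "\<dots> \<le> (\<Sum>i\<in>Na \<union> Nb. \<delta> a b)"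
    proof (rule sum_mono)
      fix i assume "i \<in> Na \<union> Nb"
      then have iV: "i \<in> V" unfolding Na_def Nb_def using BV by blast
      have "osc (f i) e = \<bar>f i a - f i b\<bar>" unfolding ab(1) osc_pair ..
      also have "\<dots> \<le> \<bar>\<delta> i a - \<delta> i b\<bar>" unfolding f_def by (rule min_lip)
      also have "\<dots> \<le> \<delta> a b"
      proof -
        have "\<delta> i a \<le> \<delta> i b + \<delta> b a" using met_tri[OF met iV ab(3) ab(2)] .
        moreover have "\<delta> i b \<le> \<delta> i a + \<delta> a b" using met_tri[OF met iV ab(2) ab(3)] .
        moreover have "\<delta> b a = \<delta> a b" using met_sym[OF met ab(3) ab(2)] .
        ultimately show ?thesis by linarith
      qed
      finally show "osc (f i) e \<le> \<delta> a b" .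
    qed
    also have "\<dots> = card (Na \<union> Nb) * \<delta> a b" by simp
    also have "\<dots> \<le> 2 * \<delta> a b"
      using cN met_nonneg[OF met ab(2) ab(3)] by (simp add: mult_right_mono)
    also have "\<dots> = 2 * edge_weight \<delta> e" using met_ew[OF met ab(2) ab(3)] ab(1) by simp
    finally show ?thesis .
  qed
  have "real (card B) * (m/2) = (\<Sum>i\<in>B. m/2)" by simp
  also have "\<dots> \<le> (\<Sum>i\<in>B. \<Sum>e\<in>Tm. osc (f i) e)" using low by (rule sum_mono)
  also have "\<dots> = (\<Sum>e\<in>Tm. \<Sum>i\<in>B. osc (f i) e)" by (rule sum.swap)
  also have "\<dots> \<le> (\<Sum>e\<in>Tm. 2 * edge_weight \<delta> e)" using edge by (rule sum_mono)
  also have "\<dots> = 2 * weight \<delta> Tm" unfolding weight_def by (simp add: sum_distrib_left)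
  finally show ?thesis by simp
qed

lemma rsl_sum:
  fixes l :: "'a \<Rightarrow> real"
  assumes "finite A" "\<forall>B\<subseteq>A. \<forall>b\<in>B. (\<forall>b'\<in>B. l b \<le> l b') \<longrightarrow> real (card B) * l b \<le> K"
  shows "(\<Sum>v\<in>A. l v) \<le> K * (\<Sum>i=1..card A. 1 / real i)"
  using assms
proof (induction "card A" arbitrary: A)
  case 0 then show ?case by simp
next
  case (Suc n)
  then have ne: "A \<noteq> {}" by auto
  have "Min (l ` A) \<in> l ` A" using Min_in[of "l ` A"] Suc.prems(1) ne by simp
  then obtain m where m: "m \<in> A" "l m = Min (l ` A)" by (metis imageE)
  have mmin: "\<forall>b'\<in>A. l m \<le> l b'" using m Suc.prems(1) by simp
  have "real (card A) * l m \<le> K" using Suc.prems(2) m(1) mmin by blast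
  then have lm: "l m \<le> K * (1 / real (Suc n))" using Suc.hyps(2) by (simp add: field_simps)
  have cA: "n = card (A - {m})" using Suc.hyps(2) m(1) by simp
  have IH: "(\<Sum>v\<in>A - {m}. l v) \<le> K * (\<Sum>i=1..n. 1 / real i)"
  proof -
    have "\<forall>B\<subseteq>A - {m}. \<forall>b\<in>B. (\<forall>b'\<in>B. l b \<le> l b') \<longrightarrow> real (card B) * l b \<le> K"
      using Suc.prems(2) by blast
    then show ?thesis using Suc.hyps(1)[OF cA] Suc.prems(1) cA by simp
  qed
  have "(\<Sum>v\<in>A. l v) = l m + (\<Sum>v\<in>A - {m}. l v)" using sum.remove[OF Suc.prems(1) m(1)] .
  also have "\<dots> \<le> K * (1 / real (Suc n)) + K * (\<Sum>i=1..n. 1 / real i)" using lm IH by linarith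
  also have "\<dots> = K * (\<Sum>i=1..Suc n. 1 / real i)" by (simp add: distrib_left)
  finally show ?case using Suc.hyps(2) by simp
qed

lemma harm_ln: "N \<ge> 1 \<Longrightarrow> (\<Sum>i=1..N. 1 / real i) \<le> 1 + ln (real N)"
proof (induction N rule: dec_induct)
  case base then show ?case by simp
next
  case (step N)
  have N: "real N \<ge> 1" using step.hyps by simp
  have "ln (real N / real (Suc N)) \<le> real N / real (Suc N) - 1"
    by (rule ln_le_minus_one) (use N in simp)
  moreover have "ln (real N / real (Suc N)) = ln (real N) - ln (real (Suc N))"
    using N by (simp add: ln_div)
  moreover have "real N / real (Suc N) - 1 = - (1 / real (Suc N))" by (simp add: field_simps)
  ultimately have "1 / real (Suc N) \<le> ln (real (Suc N)) - ln (real N)" by linarith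
  then show ?case using step.IH by simp
qed

lemma ln2: "1/2 \<le> ln (2::real)"
proof -
  have "ln (1/2::real) \<le> 1/2 - 1" by (rule ln_le_minus_one) simp
  moreover have "ln (1/2::real) = - ln 2" by (simp add: ln_div)
  ultimately show ?thesis by linarith
qed


lemma sep:
  assumes met: "metric_on V \<delta>" and fin: "finite V" and ps: "PS V \<rho> p dep"
    and TT: "T = tree_of V \<rho> p" and mst: "is_mst V \<delta> (sdg_edges V \<delta> r') T"
    and x: "x \<in> V - {\<rho>}" and y: "y \<in> V - {\<rho>}" and xy: "x \<noteq> y"
  shows "min (\<delta> x (p x)) (\<delta> y (p y)) \<le> \<delta> x y"
proof (rule ccontr)
  assume "\<not> ?thesis"
  then have lx: "\<delta> x y < \<delta> x (p x)" and ly: "\<delta> x y < \<delta> y (p y)" by auto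
  have TG: "T \<subseteq> sdg_edges V \<delta> r'" using mst unfolding is_mst_def spanning_tree_def by blast
  have "{x, p x} \<in> T" unfolding TT tree_of_def using x by blast
  then have rx: "\<delta> x (p x) \<le> r' x" using sdg_mem[OF met] TG by blast
  have "{y, p y} \<in> T" unfolding TT tree_of_def using y by blast
  then have ry: "\<delta> y (p y) \<le> r' y" using sdg_mem[OF met] TG by blast
  have xV: "x \<in> V" and yV: "y \<in> V" using x y by auto
  have syx: "\<delta> y x = \<delta> x y" using met_sym[OF met yV xV] .
  have exy: "{x,y} \<in> sdg_edges V \<delta> r'" by (rule sdg_intro) (use xV yV xy lx ly rx ry in auto)
  have eyx: "{y,x} \<in> sdg_edges V \<delta> r'" using exy by (simp add: insert_commute)
  have xsx: "x \<in> sub V \<rho> p x" unfolding sub_def using xV by simp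
  have ysy: "y \<in> sub V \<rho> p y" unfolding sub_def using yV by simp
  have "y \<in> sub V \<rho> p x"
  proof (rule ccontr)
    assume "y \<notin> sub V \<rho> p x"
    from cut[OF met fin ps TT mst sdg_sub x xsx yV this exy] lx show False by simp
  qed
  moreover have "x \<in> sub V \<rho> p y"
  proof (rule ccontr)
    assume "x \<notin> sub V \<rho> p y"
    from cut[OF met fin ps TT mst sdg_sub y ysy xV this eyx] ly syx show False by simp
  qed
  ultimately have "x = y" using anc_antisym[OF ps] unfolding sub_def by blast
  then show False using xy by simp
qed

lemma main_bound:
  assumes met: "metric_on V \<delta>" and fin: "finite V" and n2: "card V \<ge> 2"
    and mst: "is_mst V \<delta> (sdg_edges V \<delta> r') T"
    and mstm: "is_mst V \<delta> (complete_edges V) Tm"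
  shows "weight \<delta> T \<le> 12 * ln (real (card V)) * weight \<delta> Tm"
proof -
  have "V \<noteq> {}" using n2 by auto
  then obtain \<rho> where \<rho>: "\<rho> \<in> V" by blast
  have st: "spanning_tree V (sdg_edges V \<delta> r') T" using mst unfolding is_mst_def by blast
  obtain p dep where ps: "PS V \<rho> p dep" and TT: "T = tree_of V \<rho> p"
    using spanning_PS[OF st sdg_sub fin \<rho>] by blast
  have stm: "spanning_tree V (complete_edges V) Tm" using mstm unfolding is_mst_def by blast
  define W where "W = weight \<delta> Tm"
  have "\<forall>e\<in>Tm. \<exists>a b. e = {a,b} \<and> a \<in> V \<and> b \<in> V" using st_props(2)[OF stm fin] by blast
  then have W0: "0 \<le> W" unfolding W_def using weight_nonneg[OF met st_props(1)[OF stm fin]] by blast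
  define l where "l v = \<delta> v (p v)" for v
  define A where "A = V - {\<rho>}"
  have pV: "p v \<in> V" if "v \<in> A" for v using ps that unfolding PS_def A_def by blast
  have key: "\<forall>B\<subseteq>A. \<forall>b\<in>B. (\<forall>b'\<in>B. l b \<le> l b') \<longrightarrow> real (card B) * l b \<le> 4 * W"
  proof (intro allI impI ballI)
    fix B b assume BA: "B \<subseteq> A" and b: "b \<in> B" and bmin: "\<forall>b'\<in>B. l b \<le> l b'"
    have Bfin: "finite B" using BA fin finite_subset unfolding A_def by blast
    show "real (card B) * l b \<le> 4 * W"
    proof (cases "card B \<ge> 2")
      case True
      show ?thesis
      proof (cases "l b > 0")
        case False
        then have "real (card B) * l b \<le> 0" by (simp add: mult_nonneg_nonpos)
        then show ?thesis using W0 by linarith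
      next
        case lpos: True
        have sepB: "\<forall>i\<in>B. \<forall>j\<in>B. i \<noteq> j \<longrightarrow> l b \<le> \<delta> i j"
        proof (intro ballI impI)
          fix i j assume i: "i \<in> B" and j: "j \<in> B" and ij: "i \<noteq> j"
          have "min (\<delta> i (p i)) (\<delta> j (p j)) \<le> \<delta> i j"
            using sep[OF met fin ps TT mst _ _ ij] i j BA unfolding A_def by blast
          moreover have "l b \<le> l i" "l b \<le> l j" using bmin i j by auto
          ultimately show "l b \<le> \<delta> i j" unfolding l_def by linarith
        qed
        have BV: "B \<subseteq> V" using BA unfolding A_def by blast
        show ?thesis using packing[OF met fin stm BV True lpos sepB] unfolding W_def .
      qed
    next
      case False
      have "card B \<ge> 1" using b Bfin card_0_eq[OF Bfin] by (metis Suc_leI empty_iff neq0_conv One_nat_def)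
      then have cB: "card B = 1" using False by linarith
      have bV: "b \<in> V" using b BA unfolding A_def by blast
      have pbV: "p b \<in> V" using pV b BA by blast
      have lip: "\<forall>a\<in>V. \<forall>a'\<in>V. \<bar>\<delta> b a - \<delta> b a'\<bar> \<le> \<delta> a a'"
      proof (intro ballI)
        fix a a' assume a: "a \<in> V" and a': "a' \<in> V"
        have "\<delta> b a \<le> \<delta> b a' + \<delta> a' a" using met_tri[OF met bV a' a] .
        moreover have "\<delta> b a' \<le> \<delta> b a + \<delta> a a'" using met_tri[OF met bV a a'] .
        moreover have "\<delta> a' a = \<delta> a a'" using met_sym[OF met a' a] .
        ultimately show "\<bar>\<delta> b a - \<delta> b a'\<bar> \<le> \<delta> a a'" by linarith
      qed
      have "\<bar>\<delta> b b - \<delta> b (p b)\<bar> \<le> W" unfolding W_def by (rule lip_path[OF met fin stm bV pbV lip])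
      moreover have "\<delta> b b = 0" using met bV unfolding metric_on_def by blast
      moreover have "0 \<le> \<delta> b (p b)" using met_nonneg[OF met bV pbV] .
      ultimately have "l b \<le> W" unfolding l_def by simp
      then show ?thesis using cB W0 by simp
    qed
  qed
  have Afin: "finite A" unfolding A_def using fin by simp
  have cA: "card A = card V - 1" unfolding A_def using fin \<rho> by simp
  have "weight \<delta> T = (\<Sum>v\<in>A. l v)" unfolding TT A_def l_def by (rule weight_tree[OF met ps])
  also have "\<dots> \<le> 4 * W * (\<Sum>i=1..card A. 1 / real i)" by (rule rsl_sum[OF Afin key])
  also have "\<dots> \<le> 4 * W * (1 + ln (real (card A)))"
    using harm_ln[of "card A"] cA n2 W0 by (simp add: mult_left_mono)
  also have "\<dots> \<le> 4 * W * (3 * ln (real (card V)))"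
  proof -
    have "real (card A) \<le> real (card V)" using cA by simp
    then have "ln (real (card A)) \<le> ln (real (card V))" using cA n2 by simp
    moreover have "ln 2 \<le> ln (real (card V))" using n2 by simp
    ultimately have "1 + ln (real (card A)) \<le> 3 * ln (real (card V))" using ln2 by linarith
    then have "(4*W) * (1 + ln (real (card A))) \<le> (4*W) * (3 * ln (real (card V)))"
      using W0 by (intro mult_left_mono) auto
    then show ?thesis by simp
  qed
  finally show ?thesis unfolding W_def by (simp add: algebra_simps)
qed


lemma tree_range_lemma:
  assumes met: "metric_on V \<delta>" and fin: "finite V" and n2: "card V \<ge> 2"
    and st: "spanning_tree V (sdg_edges V \<delta> r') T"
  shows "feasible V \<delta> r' (tree_range \<delta> T) \<and> COST V (tree_range \<delta> T) \<le> 2 * weight \<delta> T"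
proof -
  have TG: "T \<subseteq> sdg_edges V \<delta> r'" using st unfolding spanning_tree_def by blast
  have TC: "T \<subseteq> complete_edges V" using TG sdg_sub by blast
  have Tfin: "finite T" using TC ce_finite[OF fin] finite_subset by blast
  have gcT: "graph_connected V T" using st unfolding spanning_tree_def by blast
  have eT: "\<exists>a b. e = {a,b} \<and> a \<in> V \<and> b \<in> V \<and> a \<noteq> b" if "e \<in> T" for e
    using TC that ce_elem by blast
  define S where "S v = {edge_weight \<delta> e | e. e \<in> T \<and> v \<in> e}" for v
  have trS: "tree_range \<delta> T v = Max (S v)" for v unfolding tree_range_def S_def ..
  have Sfin: "finite (S v)" for v
  proof -
    have "S v = edge_weight \<delta> ` {e \<in> T. v \<in> e}" unfolding S_def by blast
    then show ?thesis using Tfin by simp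
  qed
  have Sne: "S v \<noteq> {}" if v: "v \<in> V" for v
  proof -
    have "\<exists>u\<in>V. u \<noteq> v"
    proof (rule ccontr)
      assume "\<not> (\<exists>u\<in>V. u \<noteq> v)"
      then have "V \<subseteq> {v}" by blast
      then have "card V \<le> card {v}" by (rule card_mono[rotated]) simp
      then show False using n2 by simp
    qed
    then obtain u where u: "u \<in> V" "u \<noteq> v" by blast
    have "(v,u) \<in> (Rel T)\<^sup>*" using gcT v u unfolding gc_Rel by blast
    then obtain z where "(v,z) \<in> Rel T" using u(2) by (cases rule: converse_rtranclE) auto
    then have "{v,z} \<in> T" unfolding Rel_def by simp
    then show ?thesis unfolding S_def by blast
  qed
  have Snn: "x \<ge> 0" if xS: "x \<in> S v" for x v
  proof -
    obtain e where e: "x = edge_weight \<delta> e" "e \<in> T" using xS unfolding S_def by blast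
    then obtain a b where "e = {a,b}" "a \<in> V" "b \<in> V" using eT by blast
    then show ?thesis using e met_ew[OF met] met_nonneg[OF met] by simp
  qed
  have Sle: "x \<le> r' v" if xS: "x \<in> S v" for x v
  proof -
    obtain e where e: "x = edge_weight \<delta> e" "e \<in> T" "v \<in> e" using xS unfolding S_def by blast
    then obtain a b where ab: "e = {a,b}" "a \<in> V" "b \<in> V" using eT by blast
    have "{a,b} \<in> sdg_edges V \<delta> r'" using TG e(2) ab(1) by blast
    then have "\<delta> a b \<le> r' a" "\<delta> a b \<le> r' b" using sdg_mem[OF met] by blast+
    moreover have "v = a \<or> v = b" using e(3) ab(1) by blast
    ultimately show ?thesis using e(1) ab met_ew[OF met] by auto
  qed
  have feas: "feasible V \<delta> r' (tree_range \<delta> T)"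
    unfolding feasible_def
  proof (intro conjI ballI)
    fix v assume v: "v \<in> V"
    have "Max (S v) \<in> S v" using Max_in[OF Sfin Sne[OF v]] .
    then show "0 \<le> tree_range \<delta> T v" "tree_range \<delta> T v \<le> r' v" unfolding trS using Snn Sle by blast+
  next
    have "T \<subseteq> sdg_edges V \<delta> (tree_range \<delta> T)"
    proof
      fix e assume e: "e \<in> T"
      then obtain a b where ab: "e = {a,b}" "a \<in> V" "b \<in> V" "a \<noteq> b" using eT by blast
      have w: "edge_weight \<delta> e = \<delta> a b" using ab met_ew[OF met] by simp
      have "edge_weight \<delta> e \<in> S a" "edge_weight \<delta> e \<in> S b" unfolding S_def using e ab(1) by blast+
      then have "\<delta> a b \<le> tree_range \<delta> T a" "\<delta> a b \<le> tree_range \<delta> T b"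
        unfolding trS w[symmetric] using Max_ge[OF Sfin] by blast+
      then show "e \<in> sdg_edges V \<delta> (tree_range \<delta> T)" unfolding ab(1) using ab(2-4) by (rule_tac sdg_intro) auto
    qed
    then show "graph_connected V (sdg_edges V \<delta> (tree_range \<delta> T))" using gc_mono[OF gcT] by blast
  qed
  have "COST V (tree_range \<delta> T) \<le> (\<Sum>v\<in>V. \<Sum>e\<in>{e\<in>T. v \<in> e}. edge_weight \<delta> e)"
    unfolding COST_def
  proof (rule sum_mono)
    fix v assume v: "v \<in> V"
    have "Max (S v) \<in> S v" using Max_in[OF Sfin Sne[OF v]] .
    then obtain e0 where e0: "Max (S v) = edge_weight \<delta> e0" "e0 \<in> T" "v \<in> e0" unfolding S_def by blast
    have "edge_weight \<delta> e0 \<le> (\<Sum>e\<in>{e\<in>T. v \<in> e}. edge_weight \<delta> e)"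
    proof (rule member_le_sum)
      show "e0 \<in> {e\<in>T. v \<in> e}" using e0 by blast
      show "finite {e\<in>T. v \<in> e}" using Tfin by simp
      fix e assume "e \<in> {e\<in>T. v \<in> e} - {e0}"
      then have "edge_weight \<delta> e \<in> S v" unfolding S_def by blast
      then show "0 \<le> edge_weight \<delta> e" using Snn by blast
    qed
    then show "tree_range \<delta> T v \<le> (\<Sum>e\<in>{e\<in>T. v \<in> e}. edge_weight \<delta> e)" unfolding trS e0(1) .
  qed
  also have "\<dots> = (\<Sum>e\<in>T. \<Sum>v\<in>{v\<in>V. v \<in> e}. edge_weight \<delta> e)"
    using sum.swap_restrict[OF fin Tfin, of "\<lambda>v e. edge_weight \<delta> e" "\<lambda>v e. v \<in> e"] by simp
  also have "\<dots> = (\<Sum>e\<in>T. 2 * edge_weight \<delta> e)"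
  proof (rule sum.cong[OF refl])
    fix e assume "e \<in> T"
    then obtain a b where ab: "e = {a,b}" "a \<in> V" "b \<in> V" "a \<noteq> b" using eT by blast
    then have "{v\<in>V. v \<in> e} = {a,b}" by auto
    then show "(\<Sum>v\<in>{v\<in>V. v \<in> e}. edge_weight \<delta> e) = 2 * edge_weight \<delta> e" using ab(4) by simp
  qed
  also have "\<dots> = 2 * weight \<delta> T" unfolding weight_def by (simp add: sum_distrib_left)
  finally show ?thesis using feas by simp
qed

lemma bfs_cost:
  assumes met: "metric_on V \<delta>" and fin: "finite V" and ne: "V \<noteq> {}"
    and gc: "graph_connected V (sdg_edges V \<delta> r)" and r0: "\<forall>v\<in>V. 0 \<le> r v"
  shows "\<exists>T'. spanning_tree V (sdg_edges V \<delta> r) T' \<and> weight \<delta> T' \<le> COST V r"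
proof -
  obtain \<rho> where \<rho>: "\<rho> \<in> V" using ne by blast
  obtain p and dep :: "'a \<Rightarrow> nat" where
    h: "\<forall>v\<in>V-{\<rho>}. p v \<in> V \<and> {v, p v} \<in> sdg_edges V \<delta> r \<and> p v \<noteq> v \<and> dep (p v) < dep v"
    using bfs[OF gc \<rho> sdg_sub] by blast
  have ps: "PS V \<rho> p dep" unfolding PS_def using h \<rho> by blast
  have sub: "tree_of V \<rho> p \<subseteq> sdg_edges V \<delta> r" unfolding tree_of_def using h by blast
  have st: "spanning_tree V (sdg_edges V \<delta> r) (tree_of V \<rho> p)"
    unfolding spanning_tree_def using sub PS_conn[OF ps] PS_card[OF ps fin] by blast
  have "weight \<delta> (tree_of V \<rho> p) = (\<Sum>v\<in>V-{\<rho>}. \<delta> v (p v))" by (rule weight_tree[OF met ps])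
  also have "\<dots> \<le> (\<Sum>v\<in>V-{\<rho>}. r v)"
  proof (rule sum_mono)
    fix v assume "v \<in> V - {\<rho>}"
    then have "{v, p v} \<in> sdg_edges V \<delta> r" using h by blast
    then show "\<delta> v (p v) \<le> r v" using sdg_mem[OF met] by blast
  qed
  also have "\<dots> \<le> COST V r" unfolding COST_def
    by (rule sum_mono2[OF fin]) (use r0 in auto)
  finally show ?thesis using st by blast
qed

lemma mst_exists:
  assumes fin: "finite V" and \<rho>: "\<rho> \<in> V" and gc: "graph_connected V E" and EC: "E \<subseteq> complete_edges V"
  shows "\<exists>T. is_mst V \<delta> E T"
proof -
  define S where "S = {T. spanning_tree V E T}"
  have Efin: "finite E" using EC ce_finite[OF fin] finite_subset by blast
  have "S \<subseteq> Pow E" unfolding S_def spanning_tree_def by blast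
  then have Sfin: "finite S" using Efin by (meson finite_Pow_iff finite_subset)
  obtain p and dep :: "'a \<Rightarrow> nat" where
    h: "\<forall>v\<in>V-{\<rho>}. p v \<in> V \<and> {v, p v} \<in> E \<and> p v \<noteq> v \<and> dep (p v) < dep v"
    using bfs[OF gc \<rho> EC] by blast
  have ps: "PS V \<rho> p dep" unfolding PS_def using h \<rho> by blast
  have sub: "tree_of V \<rho> p \<subseteq> E" unfolding tree_of_def using h by blast
  have "tree_of V \<rho> p \<in> S"
    unfolding S_def spanning_tree_def using sub PS_conn[OF ps] PS_card[OF ps fin] by blast
  then have Sne: "S \<noteq> {}" by blast
  have "Min (weight \<delta> ` S) \<in> weight \<delta> ` S" using Min_in Sfin Sne by simp
  then obtain T where T: "T \<in> S" "weight \<delta> T = Min (weight \<delta> ` S)" by (metis imageE)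
  have "\<forall>T'. spanning_tree V E T' \<longrightarrow> weight \<delta> T \<le> weight \<delta> T'"
    using T Sfin unfolding S_def by simp
  then show ?thesis using T(1) unfolding is_mst_def S_def by blast
qed


lemma diam_ge:
  assumes fin: "finite V" and u: "u \<in> V" and v: "v \<in> V"
  shows "\<delta> u v \<le> diam V \<delta>"
proof -
  have eq: "{\<delta> u v | u v. u \<in> V \<and> v \<in> V} = (\<lambda>(u,v). \<delta> u v) ` (V \<times> V)" by auto
  have "finite {\<delta> u v | u v. u \<in> V \<and> v \<in> V}" unfolding eq using fin by simp
  moreover have "\<delta> u v \<in> {\<delta> u v | u v. u \<in> V \<and> v \<in> V}" using u v by blast
  ultimately show ?thesis unfolding diam_def by (rule Max_ge)
qed

lemma clip:
  assumes met: "metric_on V \<delta>" and fin: "finite V" and feas: "feasible V \<delta> r' r"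
  shows "feasible V \<delta> (\<lambda>_. diam V \<delta>) (\<lambda>v. min (r v) (diam V \<delta>)) \<and>
         COST V (\<lambda>v. min (r v) (diam V \<delta>)) \<le> COST V r"
proof -
  have d0: "0 \<le> diam V \<delta>" if "v \<in> V" for v
    using diam_ge[OF fin that that, of \<delta>] met_nonneg[OF met that that] by linarith
  have r0: "\<forall>v\<in>V. 0 \<le> r v" using feas unfolding feasible_def by blast
  have gc: "graph_connected V (sdg_edges V \<delta> r)" using feas unfolding feasible_def by blast
  have "sdg_edges V \<delta> r \<subseteq> sdg_edges V \<delta> (\<lambda>v. min (r v) (diam V \<delta>))"
  proof
    fix e assume "e \<in> sdg_edges V \<delta> r"
    then obtain a b where ab: "e = {a,b}" "a \<in> V" "b \<in> V" "a \<noteq> b" "\<delta> a b \<le> r a" "\<delta> a b \<le> r b"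
      unfolding sdg_edges_def by blast
    have "\<delta> a b \<le> diam V \<delta>" using diam_ge[OF fin ab(2) ab(3)] .
    then show "e \<in> sdg_edges V \<delta> (\<lambda>v. min (r v) (diam V \<delta>))" unfolding ab(1)
      by (intro sdg_intro) (use ab in auto)
  qed
  then have "graph_connected V (sdg_edges V \<delta> (\<lambda>v. min (r v) (diam V \<delta>)))" using gc_mono[OF gc] by blast
  moreover have "\<forall>v\<in>V. 0 \<le> min (r v) (diam V \<delta>) \<and> min (r v) (diam V \<delta>) \<le> diam V \<delta>"
    using r0 d0 by auto
  moreover have "COST V (\<lambda>v. min (r v) (diam V \<delta>)) \<le> COST V r" unfolding COST_def
    by (rule sum_mono) simp
  ultimately show ?thesis unfolding feasible_def by blast
qed

lemma cost_nonneg: "feasible V \<delta> r' r \<Longrightarrow> 0 \<le> COST V r"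
  unfolding feasible_def COST_def by (simp add: sum_nonneg)

theorem mainTheorem5:
  "\<exists>C>0. \<forall>(V :: 'a set) \<delta> r'.
     metric_on V \<delta> \<and> card V \<ge> 2 \<and> (\<forall>v\<in>V. r' v > 0) \<and>
     graph_connected V (sdg_edges V \<delta> r') \<longrightarrow>
       OPT V \<delta> \<le> OPT_bounded V \<delta> r' \<and>
       OPT_bounded V \<delta> r' \<le> C * ln (real (card V)) * OPT V \<delta> \<and>
       (\<forall>T Tm. is_mst V \<delta> (sdg_edges V \<delta> r') T \<and> is_mst V \<delta> (complete_edges V) Tm \<longrightarrow>
          feasible V \<delta> r' (tree_range \<delta> T) \<and>
          COST V (tree_range \<delta> T) \<le> 2 * weight \<delta> T \<and>
          weight \<delta> T \<le> C * ln (real (card V)) * weight \<delta> Tm \<and>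
          weight \<delta> Tm \<le> C * OPT V \<delta>)"
proof (rule exI[of _ 24], rule conjI)
  show "(0::real) < 24" by simp
  show "\<forall>(V :: 'a set) \<delta> r'.
     metric_on V \<delta> \<and> card V \<ge> 2 \<and> (\<forall>v\<in>V. r' v > 0) \<and>
     graph_connected V (sdg_edges V \<delta> r') \<longrightarrow>
       OPT V \<delta> \<le> OPT_bounded V \<delta> r' \<and>
       OPT_bounded V \<delta> r' \<le> 24 * ln (real (card V)) * OPT V \<delta> \<and>
       (\<forall>T Tm. is_mst V \<delta> (sdg_edges V \<delta> r') T \<and> is_mst V \<delta> (complete_edges V) Tm \<longrightarrow>
          feasible V \<delta> r' (tree_range \<delta> T) \<and>
          COST V (tree_range \<delta> T) \<le> 2 * weight \<delta> T \<and>
          weight \<delta> T \<le> 24 * ln (real (card V)) * weight \<delta> Tm \<and>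
          weight \<delta> Tm \<le> 24 * OPT V \<delta>)"
  proof (intro allI impI)
  fix V :: "'a set" and \<delta> r'
  assume H: "metric_on V \<delta> \<and> card V \<ge> 2 \<and> (\<forall>v\<in>V. r' v > 0) \<and> graph_connected V (sdg_edges V \<delta> r')"
  then have met: "metric_on V \<delta>" and n2: "card V \<ge> 2" and rpos: "\<forall>v\<in>V. r' v > 0"
    and gc: "graph_connected V (sdg_edges V \<delta> r')" by auto
  have fin: "finite V" using met unfolding metric_on_def by blast
  have ne: "V \<noteq> {}" using n2 by auto
  then obtain \<rho> where \<rho>: "\<rho> \<in> V" by blast
  define U where "U = {COST V r | r. feasible V \<delta> (\<lambda>_. diam V \<delta>) r}"
  define Bd where "Bd = {COST V r | r. feasible V \<delta> r' r}"
  have OPTU: "OPT V \<delta> = Inf U" unfolding OPT_def OPT_bounded_def U_def ..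
  have OPTB: "OPT_bounded V \<delta> r' = Inf Bd" unfolding OPT_bounded_def Bd_def ..
  have feas': "feasible V \<delta> r' r'" unfolding feasible_def using rpos gc by (simp add: less_imp_le)
  then have Bne: "Bd \<noteq> {}" unfolding Bd_def by blast
  have Une: "U \<noteq> {}" using clip[OF met fin feas'] unfolding U_def by blast
  have Ubdd: "bdd_below U" unfolding U_def bdd_below_def using cost_nonneg by blast
  have Bbdd: "bdd_below Bd" unfolding Bd_def bdd_below_def using cost_nonneg by blast
  have ln0: "0 \<le> ln (real (card V))" using n2 by simp
  have I1: "OPT V \<delta> \<le> OPT_bounded V \<delta> r'"
    unfolding OPTU OPTB
  proof (rule cInf_mono[OF Bne Ubdd])
    fix b assume "b \<in> Bd"
    then obtain r where r: "b = COST V r" "feasible V \<delta> r' r" unfolding Bd_def by blast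
    then show "\<exists>a\<in>U. a \<le> b" using clip[OF met fin r(2)] unfolding U_def by blast
  qed
  have W_OPT: "weight \<delta> Tm \<le> OPT V \<delta>" if mstm: "is_mst V \<delta> (complete_edges V) Tm" for Tm
    unfolding OPTU
  proof (rule cInf_greatest[OF Une])
    fix c assume "c \<in> U"
    then obtain r where r: "c = COST V r" "feasible V \<delta> (\<lambda>_. diam V \<delta>) r" unfolding U_def by blast
    have "graph_connected V (sdg_edges V \<delta> r)" "\<forall>v\<in>V. 0 \<le> r v" using r(2) unfolding feasible_def by auto
    then obtain T' where T': "spanning_tree V (sdg_edges V \<delta> r) T'" "weight \<delta> T' \<le> COST V r"
      using bfs_cost[OF met fin ne] by blast
    have "spanning_tree V (complete_edges V) T'"
      using T'(1) sdg_sub[of V \<delta> r] unfolding spanning_tree_def by blast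
    then have "weight \<delta> Tm \<le> weight \<delta> T'" using mstm unfolding is_mst_def by blast
    then show "weight \<delta> Tm \<le> c" using T'(2) r(1) by simp
  qed
  have OPT0: "0 \<le> OPT V \<delta>"
    unfolding OPTU by (rule cInf_greatest[OF Une]) (use cost_nonneg in \<open>auto simp: U_def\<close>)
  have W0: "0 \<le> weight \<delta> Tm" if mstm: "is_mst V \<delta> (complete_edges V) Tm" for Tm
  proof -
    have stm: "spanning_tree V (complete_edges V) Tm" using mstm unfolding is_mst_def by blast
    have "\<forall>e\<in>Tm. \<exists>a b. e = {a,b} \<and> a \<in> V \<and> b \<in> V" using st_props(2)[OF stm fin] by blast
    then show ?thesis using weight_nonneg[OF met st_props(1)[OF stm fin]] by blast
  qed
  have per: "feasible V \<delta> r' (tree_range \<delta> T) \<and>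
          COST V (tree_range \<delta> T) \<le> 2 * weight \<delta> T \<and>
          weight \<delta> T \<le> 24 * ln (real (card V)) * weight \<delta> Tm \<and>
          weight \<delta> Tm \<le> 24 * OPT V \<delta>"
    if "is_mst V \<delta> (sdg_edges V \<delta> r') T \<and> is_mst V \<delta> (complete_edges V) Tm" for T Tm
  proof -
    have mst: "is_mst V \<delta> (sdg_edges V \<delta> r') T" and mstm: "is_mst V \<delta> (complete_edges V) Tm"
      using that by auto
    have st: "spanning_tree V (sdg_edges V \<delta> r') T" using mst unfolding is_mst_def by blast
    have a: "feasible V \<delta> r' (tree_range \<delta> T) \<and> COST V (tree_range \<delta> T) \<le> 2 * weight \<delta> T"
      by (rule tree_range_lemma[OF met fin n2 st])
    have "weight \<delta> T \<le> 12 * ln (real (card V)) * weight \<delta> Tm" by (rule main_bound[OF met fin n2 mst mstm])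
    also have "\<dots> \<le> 24 * ln (real (card V)) * weight \<delta> Tm"
      using ln0 W0[OF mstm] by (intro mult_right_mono) auto
    finally have b: "weight \<delta> T \<le> 24 * ln (real (card V)) * weight \<delta> Tm" .
    have c: "weight \<delta> Tm \<le> 24 * OPT V \<delta>" using W_OPT[OF mstm] OPT0 by linarith
    show ?thesis using a b c by blast
  qed

  obtain T0 where mst0: "is_mst V \<delta> (sdg_edges V \<delta> r') T0"
    using mst_exists[OF fin \<rho> gc sdg_sub] by blast
  obtain Tm0 where mstm0: "is_mst V \<delta> (complete_edges V) Tm0"
    using mst_exists[OF fin \<rho> gc_mono[OF gc sdg_sub] order_refl] by blast
  have P: "feasible V \<delta> r' (tree_range \<delta> T0) \<and>
          COST V (tree_range \<delta> T0) \<le> 2 * weight \<delta> T0"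
    using per[of T0 Tm0] mst0 mstm0 by blast
  have P2: "weight \<delta> T0 \<le> 12 * ln (real (card V)) * weight \<delta> Tm0"
    by (rule main_bound[OF met fin n2 mst0 mstm0])
  have "OPT_bounded V \<delta> r' \<le> COST V (tree_range \<delta> T0)"
    unfolding OPTB by (rule cInf_lower[OF _ Bbdd]) (use P in \<open>auto simp: Bd_def\<close>)
  also have "\<dots> \<le> 2 * (12 * ln (real (card V)) * weight \<delta> Tm0)" using P P2 by linarith
  also have "\<dots> \<le> 2 * (12 * ln (real (card V)) * OPT V \<delta>)"
    using W_OPT[OF mstm0] ln0 by (simp add: mult_left_mono)
  finally have I2: "OPT_bounded V \<delta> r' \<le> 24 * ln (real (card V)) * OPT V \<delta>" by simp
  show "OPT V \<delta> \<le> OPT_bounded V \<delta> r' \<and>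
       OPT_bounded V \<delta> r' \<le> 24 * ln (real (card V)) * OPT V \<delta> \<and>
       (\<forall>T Tm. is_mst V \<delta> (sdg_edges V \<delta> r') T \<and> is_mst V \<delta> (complete_edges V) Tm \<longrightarrow>
          feasible V \<delta> r' (tree_range \<delta> T) \<and>
          COST V (tree_range \<delta> T) \<le> 2 * weight \<delta> T \<and>
          weight \<delta> T \<le> 24 * ln (real (card V)) * weight \<delta> Tm \<and>
          weight \<delta> Tm \<le> 24 * OPT V \<delta>)"
    using I1 I2 per by blast
  qed
qed
end
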